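(* For every $n\ge2$ and all masses $m_1,\dots,m_n>0$, the $n$-body problem in ${\bf H}^2$ has no fixed points: there is no collisionless configuration ${\bf q}^0\in({\bf H}^2)^n$ such that the constant function ${\bf q}(t)\equiv{\bf q}^0$ solves the equations of motion.
   Context: The $n$-body problem in ${\bf H}^2$ (Weierstrass model): with the Lorentz inner product ${\bf a}\boxdot{\bf b}=a_xb_x+a_yb_y-a_zb_z$ on $\mathbb R^3$, ${\bf H}^2=\{(x,y,z): x^2+y^2-z^2=-1,\ z>0\}$. Bodies of masses $m_1,\dots,m_n>0$ have positions ${\bf q}_i=(x_i,y_i,z_i)\in{\bf H}^2$ and satisfy $$\ddot{\bf q}_i=\sum_{j\ne i}\frac{m_j[{\bf q}_j+({\bf q}_i\boxdot{\bf q}_j){\bf q}_i]}{[({\bf q}_i\boxdot{\bf q}_j)^2-1]^{3/2}}+(\dot{\bf q}_i\boxdot\dot{\bf q}_i){\bf q}_i,\qquad {\bf q}_i\boxdot{\bf q}_i=-1,\ \ {\bf q}_i\boxdot\dot{\bf q}_i=0,$$ $i=1,\dots,n$, defined only for collisionless configurations (${\bf q}_i\ne{\bf q}_j$, equivalently ${\bf q}_i\boxdot{\bf q}_j\ne-1$, for $i\ne j$). These come from the force function $\sum_{i<j}m_im_j\coth d({\bf q}_i,{\bf q}_j)$ with $d$ the hyperbolic distance $\cosh^{-1}(-{\bf q}_i\boxdot{\bf q}_j)$. *)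

theory Defs
  imports "HOL-Analysis.Analysis"
begin

definition lorentz :: "real^3 \<Rightarrow> real^3 \<Rightarrow> real" where
  "lorentz a b = a$1 * b$1 + a$2 * b$2 - a$3 * b$3"

text \<open>The upper sheet of the hyperboloid (Weierstrass model of H^2).\<close>
definition H2 :: "(real^3) set" where
  "H2 = {p. lorentz p p = -1 \<and> p$3 > 0}"

text \<open>Configurations of n bodies: bodies indexed by 0..n-1.\<close>
definition collisionless :: "nat \<Rightarrow> (nat \<Rightarrow> real^3) \<Rightarrow> bool" where
  "collisionless n q \<longleftrightarrow> (\<forall>i<n. \<forall>j<n. i \<noteq> j \<longrightarrow> q i \<noteq> q j)"

definition accel :: "(nat \<Rightarrow> real) \<Rightarrow> nat \<Rightarrow> (nat \<Rightarrow> real^3) \<Rightarrow> (nat \<Rightarrow> real^3) \<Rightarrow> nat \<Rightarrow> real^3" where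
  "accel m n q v i =
     (\<Sum>j\<in>{..<n} - {i}.
        (m j / (((lorentz (q i) (q j))\<^sup>2 - 1) powr (3/2))) *\<^sub>R (q j + lorentz (q i) (q j) *\<^sub>R q i))
     + lorentz (v i) (v i) *\<^sub>R q i"

definition solves :: "(nat \<Rightarrow> real) \<Rightarrow> nat \<Rightarrow> (real \<Rightarrow> nat \<Rightarrow> real^3) \<Rightarrow> bool" where
  "solves m n q \<longleftrightarrow> (\<exists>v :: real \<Rightarrow> nat \<Rightarrow> real^3. \<forall>t. collisionless n (q t) \<and>
      (\<forall>i<n. q t i \<in> H2 \<and> lorentz (q t i) (v t i) = 0 \<and>
        ((\<lambda>s. q s i) has_vector_derivative v t i) (at t) \<and>
        ((\<lambda>s. v s i) has_vector_derivative accel m n (q t) (v t) i) (at t)))"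

end

theory Submission
  imports Defs
begin
lemma real_key:
  fixes x1 y1 z1 x2 y2 z2 :: real
  assumes h1: "x1*x1 + y1*y1 - z1*z1 = -1" and p1: "z1 > 0"
    and h2: "x2*x2 + y2*y2 - z2*z2 = -1" and p2: "z2 > 0"
    and ne: "\<not> (x1 = x2 \<and> y1 = y2 \<and> z1 = z2)"
  shows "z1*z2 - x1*x2 - y1*y2 > 1"
proof (cases "x1 = x2 \<and> y1 = y2")
  case True
  then have "z1^2 = z2^2" using h1 h2 by (auto simp: power2_eq_square)
  then have "z1 = z2" using p1 p2 power2_eq_imp_eq[of z1 z2] by simp
  then show ?thesis using True ne by auto
next
  case False
  have a: "z1*z1 = 1 + x1*x1 + y1*y1" using h1 by linarith
  have b: "z2*z2 = 1 + x2*x2 + y2*y2" using h2 by linarith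
  have "(z1*z2)^2 = (z1*z1)*(z2*z2)" by (simp add: power2_eq_square)
  also have "\<dots> = (1 + x1*x1 + y1*y1)*(1 + x2*x2 + y2*y2)" using a b by simp
  finally have eq: "(z1*z2)^2 - (1 + x1*x2 + y1*y2)^2 = (x1-x2)^2 + (y1-y2)^2 + (x1*y2-x2*y1)^2"
    by (simp add: power2_eq_square algebra_simps)
  have "(x1-x2)^2 > 0 \<or> (y1-y2)^2 > 0" using False by auto
  then have "(x1-x2)^2 + (y1-y2)^2 + (x1*y2-x2*y1)^2 > 0"
    by (metis add_nonneg_pos add_pos_nonneg zero_le_power2)
  then have "(1 + x1*x2 + y1*y2)^2 < (z1*z2)^2" using eq by linarith
  then have "1 + x1*x2 + y1*y2 < z1*z2"
    by (rule power2_less_imp_less) (use p1 p2 in simp)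
  then show ?thesis by linarith
qed
lemma H2_key:
  assumes "u \<in> H2" "w \<in> H2" "u \<noteq> w"
  shows "lorentz u w < -1"
proof -
  have ne: "\<not> (u$1 = w$1 \<and> u$2 = w$2 \<and> u$3 = w$3)"
    using assms(3) by (auto simp: vec_eq_iff forall_3)
  have "u$3*w$3 - u$1*w$1 - u$2*w$2 > 1"
    apply (rule real_key[OF _ _ _ _ ne])
    using assms(1,2) by (auto simp: H2_def lorentz_def)
  then show ?thesis by (simp add: lorentz_def)
qed

theorem mainTheorem12:
  fixes n :: nat and m :: "nat \<Rightarrow> real"
  assumes "n \<ge> 2"
    and "\<forall>i<n. m i > 0"
  shows "\<not> (\<exists>q0 :: nat \<Rightarrow> real^3. (\<forall>i<n. q0 i \<in> H2) \<and> collisionless n q0 \<and>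
              solves m n (\<lambda>t. q0))"
proof
  assume "\<exists>q0 :: nat \<Rightarrow> real^3. (\<forall>i<n. q0 i \<in> H2) \<and> collisionless n q0 \<and>
              solves m n (\<lambda>t. q0)"
  then obtain q0 :: "nat \<Rightarrow> real^3" where H: "\<forall>i<n. q0 i \<in> H2" and C: "collisionless n q0"
    and S: "solves m n (\<lambda>t. q0)" by blast
  from S obtain v :: "real \<Rightarrow> nat \<Rightarrow> real^3" where V: "\<forall>t. \<forall>i<n.
        ((\<lambda>s. q0 i) has_vector_derivative v t i) (at t) \<and>
        ((\<lambda>s. v s i) has_vector_derivative accel m n q0 (v t) i) (at t)"
    unfolding solves_def by blast
  have v0: "v t i = 0" if "i < n" for t i
  proof -
    have "((\<lambda>s. q0 i) has_vector_derivative v t i) (at t)" using V that by blast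
    from vector_derivative_unique_at[OF this has_vector_derivative_const] show ?thesis .
  qed
  have acc0: "accel m n q0 (v 0) i = 0" if "i < n" for i
  proof -
    have "(\<lambda>s. v s i) = (\<lambda>s. 0)" using v0 that by auto
    moreover have "((\<lambda>s. v s i) has_vector_derivative accel m n q0 (v 0) i) (at 0)" using V that by blast
    ultimately have "((\<lambda>s. 0) has_vector_derivative accel m n q0 (v 0) i) (at 0)" by simp
    from vector_derivative_unique_at[OF this has_vector_derivative_const] show ?thesis .
  qed
  define M where "M = Max ((\<lambda>j. q0 j $ 3) ` {..<n})"
  have "M \<in> (\<lambda>j. q0 j $ 3) ` {..<n}" unfolding M_def using assms(1)
    by (intro Max_in) (auto simp: lessThan_empty_iff)
  then obtain i where i: "i < n" "q0 i $ 3 = M" by auto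
  have Mge: "q0 j $ 3 \<le> M" if "j < n" for j unfolding M_def using that by auto
  have zi: "q0 i $ 3 > 0" using H i by (auto simp: H2_def)
  have lv: "lorentz (v 0 i) (v 0 i) = 0" using v0[OF i(1)] by (simp add: lorentz_def)
  have sum0: "(\<Sum>j\<in>{..<n} - {i}.
        (m j / (((lorentz (q0 i) (q0 j))\<^sup>2 - 1) powr (3/2))) *\<^sub>R (q0 j + lorentz (q0 i) (q0 j) *\<^sub>R q0 i)) = 0"
    using acc0[OF i(1)] lv by (simp add: accel_def)
  have neg: "(m j / (((lorentz (q0 i) (q0 j))\<^sup>2 - 1) powr (3/2))) * (q0 j $ 3 + lorentz (q0 i) (q0 j) * q0 i $ 3) < 0"
    if j: "j \<in> {..<n} - {i}" for j
  proof -
    have jn: "j < n" "j \<noteq> i" using j by auto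
    have "q0 i \<noteq> q0 j" using C i(1) jn unfolding collisionless_def by auto
    then have L: "lorentz (q0 i) (q0 j) < -1"
      using H2_key[of "q0 i" "q0 j"] H i(1) jn by blast
    have "1 < (- lorentz (q0 i) (q0 j)) * (- lorentz (q0 i) (q0 j))"
      by (rule less_1_mult) (use L in linarith)+
    then have "1 < (lorentz (q0 i) (q0 j))\<^sup>2" by (simp add: power2_eq_square)
    then have c: "m j / (((lorentz (q0 i) (q0 j))\<^sup>2 - 1) powr (3/2)) > 0"
      using assms(2) jn by simp
    have "q0 j $ 3 \<le> q0 i $ 3" using Mge[OF jn(1)] i by simp
    moreover have "lorentz (q0 i) (q0 j) * q0 i $ 3 < (-1) * q0 i $ 3"
      using L zi by (rule mult_strict_right_mono)
    ultimately have "q0 j $ 3 + lorentz (q0 i) (q0 j) * q0 i $ 3 < 0" by linarith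
    then show ?thesis using c by (rule mult_pos_neg[rotated])
  qed
  have nonempty: "{..<n} - {i} \<noteq> {}"
  proof
    assume "{..<n} - {i} = {}"
    moreover have "0 \<in> {..<n}" "1 \<in> {..<n}" using assms(1) by auto
    ultimately have "0 = i" "1 = i" by blast+
    then show False by simp
  qed
  have "(\<Sum>j\<in>{..<n} - {i}.
        (m j / (((lorentz (q0 i) (q0 j))\<^sup>2 - 1) powr (3/2))) * (q0 j $ 3 + lorentz (q0 i) (q0 j) * q0 i $ 3)) < (\<Sum>j\<in>{..<n} - {i}. 0)"
    by (rule sum_strict_mono[OF _ nonempty neg]) auto
  moreover have "(\<Sum>j\<in>{..<n} - {i}.
        (m j / (((lorentz (q0 i) (q0 j))\<^sup>2 - 1) powr (3/2))) * (q0 j $ 3 + lorentz (q0 i) (q0 j) * q0 i $ 3)) = 0"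
    using arg_cong[OF sum0, of "\<lambda>x. x $ 3"] by simp
  ultimately show False by simp
qed
end
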